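(* Let $G$ be a connected graph and let $H$ be a hypergraph of degree 2. If $G$ is a minor of $H^d$, then $G^d$ is a hypergraph dilution of $H$.
   Context: A hypergraph $H$ is a pair $(V(H),E(H))$ with $E(H)\subseteq 2^{V(H)}$ a set; graphs are hypergraphs all of whose edges have size 2. For a vertex $v$, $I_v$ is the set of edges containing $v$; the degree of $H$ is $\max_v |I_v|$. The dual $H^d$ of $H$ has $V(H^d)=E(H)$ and $E(H^d)=\{I_v : v\in V(H)\}$. A graph $G$ is a minor of a hypergraph $F$ if it is a minor of the primal graph of $F$ (vertices $V(F)$, with $x,y$ adjacent iff some edge of $F$ contains both), i.e., there is $\mu: V(G)\to 2^{V(F)}$ with each $\mu(v)$ connected, the $\mu(v)$ pairwise disjoint, and for adjacent $u,v$ in $G$ some primal edge joins $\mu(u)$ and $\mu(v)$. $H$ is a hypergraph dilution of $H'$ if $H$ is isomorphic to a hypergraph reachable from $H'$ by a finite sequence of: deleting a vertex (from the vertex set and all edges); deleting an edge that is a proper subset of another edge; merging on a vertex $v$, i.e., replacing all edges of $I_v$ by the single edge $(\bigcup I_v)\setminus\{v\}$. *)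

theory Defs
  imports Main
begin

type_synonym 'a hgraph = "'a set \<times> 'a set set"

definition hypergraph :: "'a hgraph \<Rightarrow> bool" where
  "hypergraph H \<longleftrightarrow> snd H \<subseteq> Pow (fst H)"

definition is_graph :: "'a hgraph \<Rightarrow> bool" where
  "is_graph G \<longleftrightarrow> hypergraph G \<and> (\<forall>e\<in>snd G. card e = 2)"

definition inc :: "'a hgraph \<Rightarrow> 'a \<Rightarrow> 'a set set" where
  "inc H v = {e \<in> snd H. v \<in> e}"

definition has_degree :: "'a hgraph \<Rightarrow> nat \<Rightarrow> bool" where
  "has_degree H k \<longleftrightarrow> (\<forall>v\<in>fst H. card (inc H v) \<le> k) \<and> (\<exists>v\<in>fst H. card (inc H v) = k)"

definition dual :: "'a hgraph \<Rightarrow> 'a set hgraph" where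
  "dual H = (snd H, inc H ` fst H)"

definition primal_adj :: "'a hgraph \<Rightarrow> 'a \<Rightarrow> 'a \<Rightarrow> bool" where
  "primal_adj F x y \<longleftrightarrow> x \<noteq> y \<and> (\<exists>e\<in>snd F. x \<in> e \<and> y \<in> e)"

definition connected_in :: "'a hgraph \<Rightarrow> 'a set \<Rightarrow> bool" where
  "connected_in F S \<longleftrightarrow> S \<noteq> {} \<and> S \<subseteq> fst F \<and>
     (\<forall>x\<in>S. \<forall>y\<in>S. (\<lambda>a b. a \<in> S \<and> b \<in> S \<and> primal_adj F a b)\<^sup>*\<^sup>* x y)"

definition connected_graph :: "'a hgraph \<Rightarrow> bool" where
  "connected_graph G \<longleftrightarrow> connected_in G (fst G)"

definition is_minor :: "'b hgraph \<Rightarrow> 'a hgraph \<Rightarrow> bool" where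
  "is_minor G F \<longleftrightarrow> (\<exists>\<mu> :: 'b \<Rightarrow> 'a set.
      (\<forall>v\<in>fst G. connected_in F (\<mu> v)) \<and>
      (\<forall>u\<in>fst G. \<forall>v\<in>fst G. u \<noteq> v \<longrightarrow> \<mu> u \<inter> \<mu> v = {}) \<and>
      (\<forall>u\<in>fst G. \<forall>v\<in>fst G. primal_adj G u v \<longrightarrow>
          (\<exists>x\<in>\<mu> u. \<exists>y\<in>\<mu> v. primal_adj F x y)))"

definition dil_step :: "'a hgraph \<Rightarrow> 'a hgraph \<Rightarrow> bool" where
  "dil_step H H' \<longleftrightarrow>
     (\<exists>v\<in>fst H. H' = (fst H - {v}, (\<lambda>e. e - {v}) ` snd H)) \<or>
     (\<exists>e\<in>snd H. (\<exists>e'\<in>snd H. e \<subset> e') \<and> H' = (fst H, snd H - {e})) \<or>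
     (\<exists>v\<in>fst H. H' = (fst H, (snd H - inc H v) \<union> {\<Union>(inc H v) - {v}}))"

definition hiso :: "'a hgraph \<Rightarrow> 'b hgraph \<Rightarrow> bool" where
  "hiso H K \<longleftrightarrow> (\<exists>f. bij_betw f (fst H) (fst K) \<and> (\<lambda>e. f ` e) ` snd H = snd K)"

definition dilution :: "'b hgraph \<Rightarrow> 'a hgraph \<Rightarrow> bool" where
  "dilution H H' \<longleftrightarrow> (\<exists>K. dil_step\<^sup>*\<^sup>* H' K \<and> hiso K H)"

end

theory Submission
  imports Defs
begin

definition st :: "'a set \<Rightarrow> 'a set \<Rightarrow> 'a set set set \<Rightarrow> 'a hgraph" where
  "st V L P = (V, (\<lambda>C. \<Union>C \<inter> L) ` P)"

lemma st_del: "v \<in> V \<Longrightarrow> dil_step (st V L P) (st (V - {v}) (L - {v}) P)"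
  unfolding dil_step_def st_def
  apply (rule disjI1)
  apply (rule bexI[of _ v])
   apply (auto simp: image_image)
  done

lemma st_merge:
  assumes "v \<in> V" "v \<in> L"
  shows "dil_step (st V L P) (st V (L - {v}) ({C\<in>P. v \<notin> \<Union>C} \<union> {\<Union>{C\<in>P. v \<in> \<Union>C}}))"
proof -
  have i: "inc (st V L P) v = (\<lambda>C. \<Union>C \<inter> L) ` {C\<in>P. v \<in> \<Union>C}"
    using assms unfolding inc_def st_def by auto
  have a: "snd (st V L P) - inc (st V L P) v = (\<lambda>C. \<Union>C \<inter> (L - {v})) ` {C\<in>P. v \<notin> \<Union>C}"
    using assms unfolding i unfolding st_def by auto
  have b: "\<Union>(inc (st V L P) v) - {v} = \<Union>(\<Union>{C\<in>P. v \<in> \<Union>C}) \<inter> (L - {v})"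
    unfolding i by auto
  show ?thesis
    unfolding dil_step_def
    apply (rule disjI2, rule disjI2)
    apply (rule bexI[of _ v])
    using assms a b apply (auto simp: st_def)[1]
    using assms by (simp add: st_def)
qed

lemma st_del_many:
  assumes "finite D"
  shows "D \<subseteq> V \<Longrightarrow> dil_step\<^sup>*\<^sup>* (st V L P) (st (V - D) (L - D) P)"
  using assms
proof (induction D rule: finite_induct)
  case empty
  then show ?case by simp
next
  case (insert x F)
  then have "dil_step\<^sup>*\<^sup>* (st V L P) (st (V - F) (L - F) P)" by simp
  moreover have "dil_step (st (V - F) (L - F) P) (st (V - F - {x}) (L - F - {x}) P)"
    using insert by (intro st_del) auto
  moreover have "V - F - {x} = V - insert x F" "L - F - {x} = L - insert x F" by auto
  ultimately show ?case by (metis rtranclp.rtrancl_into_rtrancl)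
qed

locale lctx =
  fixes G :: "'b hgraph" and H :: "'a hgraph" and \<mu> :: "'b \<Rightarrow> 'a set set"
  assumes graph: "is_graph G" and conn: "connected_graph G"
    and hyp: "hypergraph H" and finVH: "finite (fst H)" and finEH: "finite (snd H)"
    and deg: "\<forall>v\<in>fst H. card (inc H v) \<le> 2"
    and mu_conn: "\<forall>v\<in>fst G. connected_in (dual H) (\<mu> v)"
    and mu_disj: "\<forall>u\<in>fst G. \<forall>v\<in>fst G. u \<noteq> v \<longrightarrow> \<mu> u \<inter> \<mu> v = {}"
    and mu_adj: "\<forall>u\<in>fst G. \<forall>v\<in>fst G. primal_adj G u v \<longrightarrow>
          (\<exists>x\<in>\<mu> u. \<exists>y\<in>\<mu> v. primal_adj (dual H) x y)"
begin

definition AA :: "'a set set" where "AA = \<Union>(\<mu> ` fst G)"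

lemma mu_sub: "x \<in> fst G \<Longrightarrow> \<mu> x \<subseteq> snd H"
  using mu_conn unfolding connected_in_def dual_def by auto

lemma mu_ne: "x \<in> fst G \<Longrightarrow> \<mu> x \<noteq> {}"
  using mu_conn unfolding connected_in_def by auto

lemma mu_eq: "x \<in> fst G \<Longrightarrow> y \<in> fst G \<Longrightarrow> e \<in> \<mu> x \<Longrightarrow> e \<in> \<mu> y \<Longrightarrow> x = y"
  using mu_disj by blast

lemma inc_fin: "finite (inc H v)"
  using finEH unfolding inc_def by simp

lemma inc2:
  assumes "v \<in> fst H" "a \<in> inc H v" "b \<in> inc H v" "a \<noteq> b" "c \<in> inc H v"
  shows "c = a \<or> c = b"
proof (rule ccontr)
  assume "\<not> (c = a \<or> c = b)"
  then have "card {a,b,c} = 3" using assms(4) by (auto simp: card_insert_if)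
  moreover have "card {a,b,c} \<le> card (inc H v)"
    by (rule card_mono) (use inc_fin assms in auto)
  ultimately show False using deg assms(1) by fastforce
qed

definition Q where
  "Q v g \<longleftrightarrow> v \<in> fst H \<and> inc H v \<subseteq> AA \<and> (\<forall>x\<in>fst G. inc H v \<inter> \<mu> x \<noteq> {} \<longleftrightarrow> x \<in> g)"

lemma edge2: "g \<in> snd G \<Longrightarrow> \<exists>a b. a \<noteq> b \<and> g = {a,b} \<and> a \<in> fst G \<and> b \<in> fst G"
proof -
  assume g: "g \<in> snd G"
  then have "card g = 2" "g \<subseteq> fst G" using graph unfolding is_graph_def hypergraph_def by auto
  then show ?thesis by (metis card_2_iff insert_subset)
qed

lemma edge_sub: "g \<in> snd G \<Longrightarrow> g \<subseteq> fst G"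
  using graph unfolding is_graph_def hypergraph_def by auto

lemma Q_ex:
  assumes g: "g \<in> snd G" shows "\<exists>v. Q v g"
proof -
  obtain a b where ab: "a \<noteq> b" "g = {a,b}" "a \<in> fst G" "b \<in> fst G" using edge2[OF g] by blast
  have "primal_adj G a b" using ab g unfolding primal_adj_def by auto
  then obtain e f where ef: "e \<in> \<mu> a" "f \<in> \<mu> b" "primal_adj (dual H) e f" using mu_adj ab by blast
  then obtain v where v: "v \<in> fst H" "e \<in> inc H v" "f \<in> inc H v" "e \<noteq> f"
    unfolding primal_adj_def dual_def by auto
  have inc: "inc H v \<subseteq> {e,f}" using inc2[OF v(1) v(2) v(3) v(4)] by blast
  have i1: "inc H v \<subseteq> AA" using inc ef ab unfolding AA_def by auto
  have i2: "\<forall>x\<in>fst G. inc H v \<inter> \<mu> x \<noteq> {} \<longleftrightarrow> x \<in> g"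
  proof
    fix x assume x: "x \<in> fst G"
    show "inc H v \<inter> \<mu> x \<noteq> {} \<longleftrightarrow> x \<in> g"
    proof
      assume "inc H v \<inter> \<mu> x \<noteq> {}"
      then obtain c where c: "c \<in> inc H v" "c \<in> \<mu> x" by auto
      then have "c = e \<or> c = f" using inc by auto
      then show "x \<in> g" using mu_eq[OF x ab(3)] mu_eq[OF x ab(4)] ef ab c by auto
    next
      assume "x \<in> g" then show "inc H v \<inter> \<mu> x \<noteq> {}" using ab v ef by auto
    qed
  qed
  show ?thesis unfolding Q_def using v(1) i1 i2 by blast
qed

definition phi where "phi g = (SOME v. Q v g)"

lemma Q_phi: "g \<in> snd G \<Longrightarrow> Q (phi g) g"
  using Q_ex someI_ex unfolding phi_def by metis

lemma phi_inj: "inj_on phi (snd G)"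
proof (rule inj_onI)
  fix g g' assume g: "g \<in> snd G" "g' \<in> snd G" "phi g = phi g'"
  then have "\<forall>x\<in>fst G. x \<in> g \<longleftrightarrow> x \<in> g'" using Q_phi[OF g(1)] Q_phi[OF g(2)] unfolding Q_def by metis
  then show "g = g'" using edge_sub[OF g(1)] edge_sub[OF g(2)] by blast
qed

definition T where "T = phi ` snd G"
definition W where "W = {v\<in>fst H. inc H v \<noteq> {} \<and> (\<exists>x\<in>fst G. inc H v \<subseteq> \<mu> x)}"

lemma T_sub: "T \<subseteq> fst H"
  using Q_phi unfolding T_def Q_def by auto

lemma TW: "T \<inter> W = {}"
proof (rule ccontr)
  assume "T \<inter> W \<noteq> {}"
  then obtain g where g: "g \<in> snd G" "phi g \<in> W" unfolding T_def by auto
  then obtain x where x: "x \<in> fst G" "inc H (phi g) \<subseteq> \<mu> x" unfolding W_def by auto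
  obtain a b where ab: "a \<noteq> b" "g = {a,b}" "a \<in> fst G" "b \<in> fst G" using edge2[OF g(1)] by blast
  have "inc H (phi g) \<inter> \<mu> a \<noteq> {}" "inc H (phi g) \<inter> \<mu> b \<noteq> {}"
    using Q_phi[OF g(1)] ab unfolding Q_def by auto
  then have "x = a" "x = b" using x mu_eq ab by blast+
  then show False using ab by simp
qed

lemma phi_mem: assumes x: "x \<in> fst G" shows "\<Union>(\<mu> x) \<inter> T = phi ` inc G x"
proof
  show "\<Union>(\<mu> x) \<inter> T \<subseteq> phi ` inc G x"
  proof
    fix v assume "v \<in> \<Union>(\<mu> x) \<inter> T"
    then obtain e g where eg: "e \<in> \<mu> x" "v \<in> e" "g \<in> snd G" "v = phi g" unfolding T_def by auto
    then have "e \<in> inc H v" using mu_sub[OF x] unfolding inc_def by auto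
    then have "x \<in> g" using Q_phi[OF eg(3)] eg x unfolding Q_def by blast
    then show "v \<in> phi ` inc G x" using eg unfolding inc_def by auto
  qed
next
  show "phi ` inc G x \<subseteq> \<Union>(\<mu> x) \<inter> T"
  proof
    fix v assume "v \<in> phi ` inc G x"
    then obtain g where g: "g \<in> snd G" "x \<in> g" "v = phi g" unfolding inc_def by auto
    then have "inc H v \<inter> \<mu> x \<noteq> {}" using Q_phi[OF g(1)] x unfolding Q_def by blast
    then show "v \<in> \<Union>(\<mu> x) \<inter> T" using g unfolding inc_def T_def by auto
  qed
qed

definition Inv where
  "Inv M P \<longleftrightarrow> (\<forall>C\<in>P. C \<noteq> {}) \<and> \<Union>P = snd H \<and> (\<forall>C\<in>P. \<forall>C'\<in>P. C \<noteq> C' \<longrightarrow> C \<inter> C' = {})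
     \<and> (\<forall>C\<in>P. (\<exists>x\<in>fst G. C \<subseteq> \<mu> x) \<or> C \<inter> AA = {}) \<and> (\<forall>v\<in>M. \<exists>C\<in>P. inc H v \<subseteq> C)"

lemma Inv0: "Inv {} ((\<lambda>e. {e}) ` snd H)"
  unfolding Inv_def AA_def by auto

lemma Inv_step:
  assumes I: "Inv M P" and vW: "v \<in> W"
  shows "Inv (insert v M) ({C\<in>P. v \<notin> \<Union>C} \<union> {\<Union>{C\<in>P. v \<in> \<Union>C}})"
proof -
  define N where "N = \<Union>{C\<in>P. v \<in> \<Union>C}"
  obtain x where x: "x \<in> fst G" "inc H v \<subseteq> \<mu> x" "inc H v \<noteq> {}" "v \<in> fst H"
    using vW unfolding W_def by auto
  have U: "\<Union>P = snd H" and D: "\<forall>C\<in>P. \<forall>C'\<in>P. C \<noteq> C' \<longrightarrow> C \<inter> C' = {}"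
    and K: "\<forall>C\<in>P. (\<exists>x\<in>fst G. C \<subseteq> \<mu> x) \<or> C \<inter> AA = {}"
    and NE: "\<forall>C\<in>P. C \<noteq> {}" and MM: "\<forall>u\<in>M. \<exists>C\<in>P. inc H u \<subseteq> C"
    using I unfolding Inv_def by auto
  have Nx: "N \<subseteq> \<mu> x"
  proof
    fix e' assume "e' \<in> N"
    then obtain C e where C: "C \<in> P" "e \<in> C" "v \<in> e" "e' \<in> C" unfolding N_def by auto
    then have "e \<in> snd H" using U by auto
    then have e: "e \<in> \<mu> x" using C x unfolding inc_def by auto
    then have "e \<in> AA" using x unfolding AA_def by auto
    then obtain y where "y \<in> fst G" "C \<subseteq> \<mu> y" using K C by blast
    then have "y = x" using mu_eq x e C by blast
    then show "e' \<in> \<mu> x" using \<open>C \<subseteq> \<mu> y\<close> C by auto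
  qed
  have incN: "inc H v \<subseteq> N"
  proof
    fix e assume e: "e \<in> inc H v"
    then have "e \<in> \<Union>P" using U unfolding inc_def by auto
    then obtain C where "C \<in> P" "e \<in> C" by auto
    then show "e \<in> N" using e unfolding N_def inc_def by auto
  qed
  have NN: "N \<noteq> {}" using incN x by auto
  show ?thesis
    unfolding Inv_def N_def[symmetric]
  proof (intro conjI)
    show "\<forall>C\<in>{C \<in> P. v \<notin> \<Union> C} \<union> {N}. C \<noteq> {}" using NE NN by auto
    have "\<Union>({C \<in> P. v \<notin> \<Union> C} \<union> {N}) = \<Union>{C \<in> P. v \<notin> \<Union> C} \<union> N" by (simp add: Un_commute)
    also have "\<dots> = \<Union>P" unfolding N_def by blast
    finally show "\<Union>({C \<in> P. v \<notin> \<Union> C} \<union> {N}) = snd H" using U by simp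
    have ND: "N \<inter> C' = {}" if "C' \<in> P" "v \<notin> \<Union>C'" for C'
    proof -
      have "C'' \<inter> C' = {}" if "C'' \<in> P" "v \<in> \<Union>C''" for C''
        using D that \<open>C' \<in> P\<close> \<open>v \<notin> \<Union>C'\<close> by metis
      then show ?thesis unfolding N_def by blast
    qed
    show "\<forall>C\<in>{C \<in> P. v \<notin> \<Union> C} \<union> {N}. \<forall>C'\<in>{C \<in> P. v \<notin> \<Union> C} \<union> {N}. C \<noteq> C' \<longrightarrow> C \<inter> C' = {}"
    proof (intro ballI impI)
      fix C C' assume C: "C \<in> {C \<in> P. v \<notin> \<Union> C} \<union> {N}" and C': "C' \<in> {C \<in> P. v \<notin> \<Union> C} \<union> {N}"
        and ne: "C \<noteq> C'"
      show "C \<inter> C' = {}"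
      proof (cases "C = N")
        case True
        then have "C' \<in> P" "v \<notin> \<Union>C'" using C' ne by auto
        then show ?thesis using ND True by simp
      next
        case False
        then have c: "C \<in> P" "v \<notin> \<Union>C" using C by auto
        show ?thesis
        proof (cases "C' = N")
          case True
          then show ?thesis using ND[OF c] by auto
        next
          case False
          then have "C' \<in> P" using C' by auto
          then show ?thesis using D c ne by auto
        qed
      qed
    qed
    show "\<forall>C\<in>{C \<in> P. v \<notin> \<Union> C} \<union> {N}. (\<exists>x\<in>fst G. C \<subseteq> \<mu> x) \<or> C \<inter> AA = {}"
      using K Nx x by auto
    show "\<forall>va\<in>insert v M. \<exists>C\<in>{C \<in> P. v \<notin> \<Union> C} \<union> {N}. inc H va \<subseteq> C"
    proof
      fix u assume "u \<in> insert v M"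
      then show "\<exists>C\<in>{C \<in> P. v \<notin> \<Union> C} \<union> {N}. inc H u \<subseteq> C"
      proof
        assume "u = v" then show ?thesis using incN by auto
      next
        assume "u \<in> M"
        then obtain C where C: "C \<in> P" "inc H u \<subseteq> C" using MM by auto
        show ?thesis
        proof (cases "v \<in> \<Union>C")
          case True
          then have "C \<subseteq> N" using C unfolding N_def by auto
          then show ?thesis using C by auto
        next
          case False then show ?thesis using C by auto
        qed
      qed
    qed
  qed
qed

lemma H_st: "H = st (fst H) (fst H) ((\<lambda>e. {e}) ` snd H)"
proof -
  have "(\<lambda>C. \<Union>C \<inter> fst H) ` ((\<lambda>e. {e}) ` snd H) = snd H"
  proof -
    have sub: "\<forall>e\<in>snd H. e \<subseteq> fst H" using hyp unfolding hypergraph_def by auto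
    have "(\<lambda>C. \<Union>C \<inter> fst H) ` ((\<lambda>e. {e}) ` snd H) = (\<lambda>e. \<Union>{e} \<inter> fst H) ` snd H"
      by (rule image_image)
    also have "\<dots> = (\<lambda>e. e) ` snd H" using sub by (intro image_cong) auto
    finally show ?thesis by simp
  qed
  then show ?thesis unfolding st_def by (metis prod.collapse)
qed

lemma merge_many:
  assumes "finite M"
  shows "M \<subseteq> W \<Longrightarrow> \<exists>P. dil_step\<^sup>*\<^sup>* H (st (fst H) (fst H - M) P) \<and> Inv M P"
  using assms
proof (induction M rule: finite_induct)
  case empty
  have e: "st (fst H) (fst H - {}) ((\<lambda>e. {e}) ` snd H) = H" by (simp only: Diff_empty H_st[symmetric])
  have "dil_step\<^sup>*\<^sup>* H (st (fst H) (fst H - {}) ((\<lambda>e. {e}) ` snd H))" unfolding e by (rule rtranclp.rtrancl_refl)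
  then show ?case using Inv0 by blast
next
  case (insert v F)
  then obtain P where P: "dil_step\<^sup>*\<^sup>* H (st (fst H) (fst H - F) P)" "Inv F P" by auto
  have v: "v \<in> W" "v \<notin> F" using insert by auto
  then have vH: "v \<in> fst H" unfolding W_def by auto
  have "dil_step (st (fst H) (fst H - F) P)
     (st (fst H) (fst H - F - {v}) ({C\<in>P. v \<notin> \<Union>C} \<union> {\<Union>{C\<in>P. v \<in> \<Union>C}}))"
    using v vH by (intro st_merge) auto
  then have "dil_step\<^sup>*\<^sup>* H (st (fst H) (fst H - F - {v}) ({C\<in>P. v \<notin> \<Union>C} \<union> {\<Union>{C\<in>P. v \<in> \<Union>C}}))"
    by (rule rtranclp.rtrancl_into_rtrancl[OF P(1)])
  moreover have "fst H - F - {v} = fst H - insert v F" by auto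
  ultimately have "dil_step\<^sup>*\<^sup>* H (st (fst H) (fst H - insert v F) ({C\<in>P. v \<notin> \<Union>C} \<union> {\<Union>{C\<in>P. v \<in> \<Union>C}}))"
    by simp
  then show ?case using Inv_step[OF P(2) v(1)] by blast
qed

lemma closure:
  assumes I: "Inv W P" and C: "C \<in> P" and x: "x \<in> fst G" and Cx: "C \<subseteq> \<mu> x"
  shows "C = \<mu> x"
proof -
  have D: "\<forall>C\<in>P. \<forall>C'\<in>P. C \<noteq> C' \<longrightarrow> C \<inter> C' = {}" and WW: "\<forall>v\<in>W. \<exists>C\<in>P. inc H v \<subseteq> C"
    using I unfolding Inv_def by auto
  obtain e where e: "e \<in> C" using I C unfolding Inv_def by (metis ex_in_conv)
  define R where "R = (\<lambda>a b. a \<in> \<mu> x \<and> b \<in> \<mu> x \<and> primal_adj (dual H) a b)"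
  have R: "R\<^sup>*\<^sup>* e f" if "f \<in> \<mu> x" for f
  proof -
    have "connected_in (dual H) (\<mu> x)" using mu_conn x by blast
    then have cn: "\<forall>a\<in>\<mu> x. \<forall>b\<in>\<mu> x. R\<^sup>*\<^sup>* a b" unfolding connected_in_def R_def by simp
    have "e \<in> \<mu> x" using e Cx by blast
    then show ?thesis using cn that by blast
  qed
  have "f \<in> C" if "R\<^sup>*\<^sup>* e f" for f
    using that
  proof (induction rule: rtranclp_induct)
    case base then show ?case using e .
  next
    case (step y z)
    then have yz: "y \<in> \<mu> x" "z \<in> \<mu> x" "y \<noteq> z" "\<exists>I\<in>inc H ` fst H. y \<in> I \<and> z \<in> I"
      unfolding R_def primal_adj_def dual_def by auto
    then obtain v where v: "v \<in> fst H" "y \<in> inc H v" "z \<in> inc H v" by auto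
    have "inc H v \<subseteq> {y,z}" using inc2[OF v yz(3)] by blast
    then have "inc H v \<subseteq> \<mu> x" using yz by blast
    then have "v \<in> W" using v x unfolding W_def by auto
    then obtain C' where C': "C' \<in> P" "inc H v \<subseteq> C'" using WW by auto
    have yC': "y \<in> C'" using C' v(2) by blast
    have "C' = C"
    proof (rule ccontr)
      assume "C' \<noteq> C"
      then have "C' \<inter> C = {}" using D C'(1) C by blast
      then show False using yC' step.IH by blast
    qed
    then show ?case using C' v by auto
  qed
  then show ?thesis using R Cx by blast
qed

lemma main: "dilution (dual G) H"
proof -
  have finW: "finite W" unfolding W_def using finVH by simp
  obtain P where P: "dil_step\<^sup>*\<^sup>* H (st (fst H) (fst H - W) P)" "Inv W P"
    using merge_many[OF finW] by auto
  have D: "dil_step\<^sup>*\<^sup>* (st (fst H) (fst H - W) P) (st (fst H - (fst H - T)) (fst H - W - (fst H - T)) P)"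
    by (rule st_del_many) (use finVH in auto)
  have e1: "fst H - (fst H - T) = T" using T_sub by auto
  have e2: "fst H - W - (fst H - T) = T" using T_sub TW by auto
  define E' where "E' = (\<lambda>C. \<Union>C \<inter> T) ` P"
  define S where "S = (\<lambda>x. \<Union>(\<mu> x) \<inter> T) ` fst G"
  have stE: "st T T P = (T, E')" by (simp add: st_def E'_def)
  have reach: "dil_step\<^sup>*\<^sup>* H (T, E')" using P D e1 e2 stE by (metis rtranclp_trans)
  have U: "\<Union>P = snd H" and K: "\<forall>C\<in>P. (\<exists>x\<in>fst G. C \<subseteq> \<mu> x) \<or> C \<inter> AA = {}"
    using P(2) unfolding Inv_def by auto
  have E1: "E' \<subseteq> S \<union> {{}}"
  proof
    fix E assume "E \<in> E'"
    then obtain C where C: "C \<in> P" "E = \<Union>C \<inter> T" unfolding E'_def by auto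
    show "E \<in> S \<union> {{}}"
    proof (cases "\<exists>x\<in>fst G. C \<subseteq> \<mu> x")
      case True
      then obtain x where "x \<in> fst G" "C \<subseteq> \<mu> x" by auto
      then have "C = \<mu> x" using closure[OF P(2) C(1)] by auto
      then show ?thesis using C \<open>x \<in> fst G\<close> unfolding S_def by auto
    next
      case False
      then have CA: "C \<inter> AA = {}" using K C by auto
      have "E = {}"
      proof (rule ccontr)
        assume "E \<noteq> {}"
        then obtain v e g where v: "e \<in> C" "v \<in> e" "g \<in> snd G" "v = phi g"
          using C unfolding T_def by auto
        then have "e \<in> inc H v" using U C unfolding inc_def by auto
        then have "e \<in> AA" using Q_phi[OF v(3)] v(4) unfolding Q_def by auto
        then show False using CA v by auto
      qed
      then show ?thesis by simp
    qed
  qed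
  have E2: "S \<subseteq> E'"
  proof
    fix E assume "E \<in> S"
    then obtain x where x: "x \<in> fst G" "E = \<Union>(\<mu> x) \<inter> T" unfolding S_def by auto
    obtain e where e: "e \<in> \<mu> x" using mu_ne[OF x(1)] by auto
    then have "e \<in> \<Union>P" using U mu_sub[OF x(1)] by auto
    then obtain C where C: "C \<in> P" "e \<in> C" by auto
    have "e \<in> AA" using e x unfolding AA_def by auto
    then obtain y where y: "y \<in> fst G" "C \<subseteq> \<mu> y" using K C by blast
    then have "y = x" using mu_eq x e C by blast
    then have "C = \<mu> x" using closure[OF P(2) C(1)] y by auto
    then show "E \<in> E'" using C x unfolding E'_def by auto
  qed
  have reach2: "dil_step\<^sup>*\<^sup>* H (T, S)"
  proof (cases "{} \<in> E' \<and> {} \<notin> S")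
    case True
    have "fst G \<noteq> {}" using conn unfolding connected_graph_def connected_in_def by auto
    then have "S \<noteq> {}" unfolding S_def by auto
    then obtain E0 where E0: "E0 \<in> S" by auto
    then have "E0 \<noteq> {}" using True by auto
    then have "{} \<subset> E0" by auto
    then have "dil_step (T, E') (T, E' - {{}})"
      unfolding dil_step_def using True E0 E2 by (intro disjI2 disjI1) auto
    moreover have "E' - {{}} = S" using E1 E2 True by auto
    ultimately show ?thesis using reach by (metis rtranclp.rtrancl_into_rtrancl)
  next
    case False
    then have "E' = S" using E1 E2 by auto
    then show ?thesis using reach by simp
  qed
  have bij: "bij_betw phi (snd G) T" unfolding T_def using phi_inj by (simp add: bij_betw_imageI)
  have S2: "S = (\<lambda>x. phi ` inc G x) ` fst G" unfolding S_def using phi_mem by simp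
  have cancel: "inv_into (snd G) phi ` phi ` inc G x = inc G x" for x
  proof -
    have "inc G x \<subseteq> snd G" unfolding inc_def by auto
    then show ?thesis using inv_into_image_cancel[OF phi_inj] by blast
  qed
  have "(\<lambda>e. inv_into (snd G) phi ` e) ` S = inc G ` fst G"
  proof -
    have "(\<lambda>e. inv_into (snd G) phi ` e) ` ((\<lambda>x. phi ` inc G x) ` fst G)
        = (\<lambda>x. inv_into (snd G) phi ` (phi ` inc G x)) ` fst G" by (rule image_image)
    also have "\<dots> = inc G ` fst G" by (simp only: cancel)
    finally show ?thesis unfolding S2 .
  qed
  then have "hiso (T, S) (dual G)"
    unfolding hiso_def dual_def using bij_betw_inv_into[OF bij] by auto
  then show ?thesis unfolding dilution_def using reach2 by blast
qed

end

theorem lemma4p3: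
  fixes G :: "'b hgraph" and H :: "'a hgraph"
  assumes "is_graph G" and "finite (fst G)" and "connected_graph G"
    and "hypergraph H" and "finite (fst H)" and "finite (snd H)"
    and "has_degree H 2"
    and "is_minor G (dual H)"
  shows "dilution (dual G) H"
proof -
  obtain \<mu> :: "'b \<Rightarrow> 'a set set" where mu:
      "\<forall>v\<in>fst G. connected_in (dual H) (\<mu> v)"
      "\<forall>u\<in>fst G. \<forall>v\<in>fst G. u \<noteq> v \<longrightarrow> \<mu> u \<inter> \<mu> v = {}"
      "\<forall>u\<in>fst G. \<forall>v\<in>fst G. primal_adj G u v \<longrightarrow> (\<exists>x\<in>\<mu> u. \<exists>y\<in>\<mu> v. primal_adj (dual H) x y)"
    using assms(8) unfolding is_minor_def by blast
  have deg: "\<forall>v\<in>fst H. card (inc H v) \<le> 2" using assms(7) unfolding has_degree_def by auto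
  interpret lctx G H \<mu>
    using assms deg mu by unfold_locales auto
  show ?thesis by (rule main)
qed

end
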